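(* Let $R$ be an abelian Rickart $*$-ring and $a_1,a_2,b_1,b_2\in R$ with $a_1\perp a_2$, $b_1\perp b_2$, $a_1\sim b_1$ and $a_2\sim b_2$. Then $a_1+a_2\sim b_1+b_2$.
   Context: A Rickart $*$-ring is a $*$-ring in which the right annihilator of every element is generated as a right ideal by a projection ($e=e^2=e^*$); it has unity. Abelian: all idempotents central. Orthogonality: $a\perp b$ iff there is $x\in R$ with $xa=a=ax^*$ and $xb=0=bx^*$. Equivalence: $a\sim b$ iff there exist $x,y\in R$ with $aa^*=xx^*$, $bb^*=yy^*$, $a^*a=y^*y$, $b^*b=x^*x$, $x=ax=xb$, $y=by=ya$. *)

theory Defs
  imports Main
begin

class star_ring = ring_1 +
  fixes star :: "'a \<Rightarrow> 'a"
  assumes star_add: "star (x + y) = star x + star y"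
    and star_mult: "star (x * y) = star y * star x"
    and star_star: "star (star x) = x"

definition projection :: "'a::star_ring \<Rightarrow> bool" where
  "projection e \<longleftrightarrow> e * e = e \<and> star e = e"

definition right_annihilator :: "'a::ring_1 \<Rightarrow> 'a set" where
  "right_annihilator x = {y. x * y = 0}"

definition rickart_star_ring :: "'a::star_ring itself \<Rightarrow> bool" where
  "rickart_star_ring TYPE('a) \<longleftrightarrow>
     (\<forall>x::'a. \<exists>e. projection e \<and> right_annihilator x = {e * r | r. True})"

definition abelian_ring :: "'a::ring_1 itself \<Rightarrow> bool" where
  "abelian_ring TYPE('a) \<longleftrightarrow> (\<forall>e::'a. e * e = e \<longrightarrow> (\<forall>r. e * r = r * e))"

definition orth :: "'a::star_ring \<Rightarrow> 'a \<Rightarrow> bool" where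
  "orth a b \<longleftrightarrow> (\<exists>x. x * a = a \<and> a = a * star x \<and> x * b = 0 \<and> b * star x = 0)"

definition star_equiv :: "'a::star_ring \<Rightarrow> 'a \<Rightarrow> bool" where
  "star_equiv a b \<longleftrightarrow> (\<exists>x y. a * star a = x * star x \<and> b * star b = y * star y \<and>
      star a * a = star y * y \<and> star b * b = star x * x \<and>
      x = a * x \<and> x = x * b \<and> y = b * y \<and> y = y * a)"

end

theory Submission
  imports Defs
begin

lemma star_zero': "star (0::'a::star_ring) = 0"
proof -
  have "star (0::'a) = star 0 + star 0" by (metis add_0 star_add)
  thus ?thesis by simp
qed

lemma orth_proj:
  fixes a b :: "'a::star_ring"
  assumes "rickart_star_ring TYPE('a)" and "abelian_ring TYPE('a)" and "orth a b"
  shows "\<exists>e. projection e \<and> (\<forall>r. e*r = r*e) \<and> e*a = 0 \<and> e*b = b"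
proof -
  obtain u where u: "u * a = a" "u * b = 0" using assms(3) unfolding orth_def by blast
  obtain e where e: "projection e" and ann: "right_annihilator u = {e * r | r. True}"
    using assms(1) unfolding rickart_star_ring_def by blast
  have ee: "e*e = e" using e unfolding projection_def by simp
  have c: "\<forall>r. e*r = r*e" using assms(2) ee unfolding abelian_ring_def by blast
  have "b \<in> right_annihilator u" using u unfolding right_annihilator_def by simp
  then obtain r where "b = e*r" using ann by blast
  hence eb: "e*b = b" using ee by (metis mult.assoc)
  have "e \<in> right_annihilator u" using ann by (metis (mono_tags, lifting) mem_Collect_eq mult_1_right)
  hence ue: "u*e = 0" unfolding right_annihilator_def by simp
  have "e*a = e*(u*a)" using u by simp
  also have "\<dots> = (u*e)*a" using c by (metis mult.assoc)
  finally have "e*a = 0" using ue by simp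
  thus ?thesis using e c eb by blast
qed

lemma kill_mult:
  fixes e p q :: "'a::star_ring"
  assumes "\<forall>r. e*r = r*e" "e*p = 0" "e*q = q"
  shows "p*q = 0" "q*p = 0"
proof -
  have "p*q = p*(e*q)" using assms by simp
  also have "\<dots> = (e*p)*q" using assms(1) by (metis mult.assoc)
  finally show "p*q = 0" using assms by simp
  have "q*p = (e*q)*p" using assms by simp
  also have "\<dots> = q*(e*p)" using assms(1) by (metis mult.assoc)
  finally show "q*p = 0" using assms by simp
qed

lemma star_kill:
  fixes e p :: "'a::star_ring"
  assumes "\<forall>r. e*r = r*e" "star e = e" "e*p = 0"
  shows "e * star p = 0"
  by (metis assms star_mult star_zero')

lemma star_fix:
  fixes e p :: "'a::star_ring"
  assumes "\<forall>r. e*r = r*e" "star e = e" "e*p = p"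
  shows "e * star p = star p"
  by (metis assms star_mult)

theorem mainTheorem14:
  fixes a1 a2 b1 b2 :: "'a::star_ring"
  assumes "rickart_star_ring TYPE('a)"
    and "abelian_ring TYPE('a)"
    and "orth a1 a2" and "orth b1 b2"
    and "star_equiv a1 b1" and "star_equiv a2 b2"
  shows "star_equiv (a1 + a2) (b1 + b2)"
proof -
  obtain e where e: "projection e" and ce: "\<forall>r. e*r = r*e" and ea1: "e*a1 = 0" and ea2: "e*a2 = a2"
    using orth_proj[OF assms(1,2,3)] by blast
  obtain f where f: "projection f" and cf: "\<forall>r. f*r = r*f" and fb1: "f*b1 = 0" and fb2: "f*b2 = b2"
    using orth_proj[OF assms(1,2,4)] by blast
  have se: "star e = e" and sf: "star f = f" using e f unfolding projection_def by auto
  obtain x1 y1 where q1: "a1 * star a1 = x1 * star x1" "b1 * star b1 = y1 * star y1"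
      "star a1 * a1 = star y1 * y1" "star b1 * b1 = star x1 * x1"
      "a1 * x1 = x1" "x1 * b1 = x1" "b1 * y1 = y1" "y1 * a1 = y1"
    using assms(5) unfolding star_equiv_def by metis
  obtain x2 y2 where q2: "a2 * star a2 = x2 * star x2" "b2 * star b2 = y2 * star y2"
      "star a2 * a2 = star y2 * y2" "star b2 * b2 = star x2 * x2"
      "a2 * x2 = x2" "x2 * b2 = x2" "b2 * y2 = y2" "y2 * a2 = y2"
    using assms(6) unfolding star_equiv_def by metis
  have ex1: "e*x1 = 0" by (metis q1(5) ea1 mult.assoc mult_zero_left)
  have ex2: "e*x2 = x2" by (metis q2(5) ea2 mult.assoc)
  have fx1: "f*x1 = 0" by (metis q1(6) cf fb1 mult.assoc mult_zero_right)
  have fx2: "f*x2 = x2" by (metis q2(6) cf fb2 mult.assoc)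
  have fy1: "f*y1 = 0" by (metis q1(7) fb1 mult.assoc mult_zero_left)
  have fy2: "f*y2 = y2" by (metis q2(7) fb2 mult.assoc)
  have ey1: "e*y1 = 0" by (metis q1(8) ce ea1 mult.assoc mult_zero_right)
  have ey2: "e*y2 = y2" by (metis q2(8) ce ea2 mult.assoc)
  note K = star_kill[OF ce se] star_kill[OF cf sf]
  note F = star_fix[OF ce se] star_fix[OF cf sf]
  note ke = kill_mult[OF ce] and kf = kill_mult[OF cf]
  have c1: "a1 * star a2 = 0" "a2 * star a1 = 0" using ke K(1) F(1) ea1 ea2 by metis+
  have c2: "x1 * star x2 = 0" "x2 * star x1 = 0" using ke K(1) F(1) ex1 ex2 by metis+
  have c3: "b1 * star b2 = 0" "b2 * star b1 = 0" using kf K(2) F(2) fb1 fb2 by metis+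
  have c4: "y1 * star y2 = 0" "y2 * star y1 = 0" using kf K(2) F(2) fy1 fy2 by metis+
  have c5: "star a1 * a2 = 0" "star a2 * a1 = 0" using ke K(1) F(1) ea1 ea2 by metis+
  have c6: "star y1 * y2 = 0" "star y2 * y1 = 0" using ke K(1) F(1) ey1 ey2 by metis+
  have c7: "star b1 * b2 = 0" "star b2 * b1 = 0" using kf K(2) F(2) fb1 fb2 by metis+
  have c8: "star x1 * x2 = 0" "star x2 * x1 = 0" using kf K(2) F(2) fx1 fx2 by metis+
  have c9: "a1 * x2 = 0" "a2 * x1 = 0" using ke ea1 ea2 ex1 ex2 by metis+
  have c10: "x1 * b2 = 0" "x2 * b1 = 0" using kf fb1 fb2 fx1 fx2 by metis+
  have c11: "b1 * y2 = 0" "b2 * y1 = 0" using kf fb1 fb2 fy1 fy2 by metis+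
  have c12: "y1 * a2 = 0" "y2 * a1 = 0" using ke ea1 ea2 ey1 ey2 by metis+
  show ?thesis unfolding star_equiv_def
    apply (rule exI[of _ "x1+x2"], rule exI[of _ "y1+y2"])
    by (simp add: star_add distrib_left distrib_right c1 c2 c3 c4 c5 c6 c7 c8 c9 c10 c11 c12 q1 q2)
qed

end
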